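(* Consider the HyperLogLogLog update procedure (described in the context) with $m$ registers, processing a stream containing $n$ distinct elements. For sufficiently large $n$ satisfying $n/(\log_2 n)^2>m^2$, with high probability the updates take amortized constant time, i.e., the total work spent on processing the $n$ distinct elements (including all calls to the compression and rebasing routines) is $O(n)$.
   Context: HyperLogLogLog sketch: parameters $m$ (a power of two), word size $w$, and $\kappa$ (bits per dense register). The uncompressed HyperLogLog registers $M'[j]\in[w]$, $j\in[m]$, are represented by a triple $(S,M,B)$: a base value $B$, a dense array $M$ of $\kappa$-bit offsets, and an associative array $S$ of (index, value) pairs; register $j$ has value $S[j]$ if $j\in S$ and $B+M[j]$ otherwise, and register $j$ is stored densely ($M[j]=M'[j]-B$) iff $B\le M'[j]<B+2^\kappa$, otherwise sparsely in $S$. Initially $S=\emptyset$, $M=0$, $B=0$. Update with element $y$: compute $j=f(y)\in[m]$ and $r=\rho(h(y))$ (the 1-based position of the first one-bit of a random $w$-bit hash value); if $r$ exceeds the current value of register $j$, set register $j$ to $r$ (densely or sparsely according to the rule above) and then call compress. Compress: choose $B'$ maximizing the number of registers $j$ with $B'\le M'[j]<B'+2^\kappa$, trying candidate base values and spending $O(m)$ work per candidate; if $B'\ne B$, rebase, i.e., reassign every register to the dense or sparse representation relative to $B'$ in $O(m)$ work, and set $B\gets B'$. Each update that does not trigger compression costs $O(1)$ work. Elements are hashed by random hash functions (register index uniform in $[m]$, $\rho$-values geometric with $\Pr[\rho=k]=2^{-k}$, independent across distinct elements). "With high probability" means with probability at least $1-\beta$ for a fixed constant $\beta\in(0,1)$.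 *)

theory Defs
  imports "HOL-Probability.Probability"
begin

text \<open>State (S, M, B) of a HyperLogLogLog sketch. S is the sparse associative array
  (index to value), M the dense array of offsets, B the base value.\<close>
record hlll_state =
  hS :: "nat \<Rightarrow> nat option"
  hM :: "nat \<Rightarrow> nat"
  hB :: nat

definition hlll_init :: hlll_state where
  "hlll_init = \<lparr>hS = (\<lambda>_. None), hM = (\<lambda>_. 0), hB = 0\<rparr>"

definition reg_val :: "hlll_state \<Rightarrow> nat \<Rightarrow> nat" where
  "reg_val s j = (case hS s j of Some v \<Rightarrow> v | None \<Rightarrow> hB s + hM s j)"

definition in_window :: "nat \<Rightarrow> nat \<Rightarrow> nat \<Rightarrow> bool" where
  "in_window \<kappa> b v \<longleftrightarrow> b \<le> v \<and> v < b + 2 ^ \<kappa>"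

definition set_reg :: "nat \<Rightarrow> hlll_state \<Rightarrow> nat \<Rightarrow> nat \<Rightarrow> hlll_state" where
  "set_reg \<kappa> s j v =
     (if in_window \<kappa> (hB s) v
      then s\<lparr>hS := (hS s)(j := None), hM := (hM s)(j := v - hB s)\<rparr>
      else s\<lparr>hS := (hS s)(j := Some v)\<rparr>)"

definition rebase :: "nat \<Rightarrow> nat \<Rightarrow> hlll_state \<Rightarrow> nat \<Rightarrow> hlll_state" where
  "rebase m \<kappa> s b' =
     \<lparr>hS = (\<lambda>j. if j < m \<and> \<not> in_window \<kappa> b' (reg_val s j) then Some (reg_val s j) else None),
      hM = (\<lambda>j. if j < m \<and> in_window \<kappa> b' (reg_val s j) then reg_val s j - b' else 0),
      hB = b'\<rparr>"

definition dense_count :: "nat \<Rightarrow> nat \<Rightarrow> hlll_state \<Rightarrow> nat \<Rightarrow> nat" where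
  "dense_count m \<kappa> s b = card {j \<in> {..<m}. in_window \<kappa> b (reg_val s j)}"

text \<open>Candidate base values tried by compress: 0, 1, ..., max register value
  (every optimal window is attained by one of them).\<close>
definition candidates :: "nat \<Rightarrow> hlll_state \<Rightarrow> nat set" where
  "candidates m s = {0 .. Max (reg_val s ` {..<m})}"

definition opt_base :: "nat \<Rightarrow> nat \<Rightarrow> hlll_state \<Rightarrow> nat" where
  "opt_base m \<kappa> s =
     (if \<forall>b \<in> candidates m s. dense_count m \<kappa> s b \<le> dense_count m \<kappa> s (hB s) then hB s
      else (LEAST b. b \<in> candidates m s \<and>
                 (\<forall>b' \<in> candidates m s. dense_count m \<kappa> s b' \<le> dense_count m \<kappa> s b)))"

text \<open>Compress: returns new state and work spent (m per candidate tried, plus m for a rebase).\<close>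
definition compress :: "nat \<Rightarrow> nat \<Rightarrow> hlll_state \<Rightarrow> hlll_state \<times> nat" where
  "compress m \<kappa> s =
     (let b' = opt_base m \<kappa> s
      in (if b' = hB s then s else rebase m \<kappa> s b',
          m * card (candidates m s) + (if b' = hB s then 0 else m)))"

text \<open>Update with an element whose hash gives register index j and rho-value r;
  returns new state and work spent (1 unit of constant work, plus compression work).\<close>
definition hlll_update :: "nat \<Rightarrow> nat \<Rightarrow> hlll_state \<Rightarrow> nat \<times> nat \<Rightarrow> hlll_state \<times> nat" where
  "hlll_update m \<kappa> s y =
     (case y of (j, r) \<Rightarrow>
        if reg_val s j < r
        then (case compress m \<kappa> (set_reg \<kappa> s j r) of (s', c) \<Rightarrow> (s', 1 + c))
        else (s, 1))"

text \<open>Random hash of a fresh distinct element: register index uniform in [m],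
  rho geometric with Pr[rho = k] = 2^(-k), k >= 1, independent.\<close>
definition hash_pmf :: "nat \<Rightarrow> (nat \<times> nat) pmf" where
  "hash_pmf m = pair_pmf (pmf_of_set {..<m}) (map_pmf Suc (geometric_pmf (1/2)))"

primrec hlll_run :: "nat \<Rightarrow> nat \<Rightarrow> nat \<Rightarrow> (hlll_state \<times> nat) pmf" where
  "hlll_run m \<kappa> 0 = return_pmf (hlll_init, 0)"
| "hlll_run m \<kappa> (Suc n) =
     bind_pmf (hlll_run m \<kappa> n)
       (\<lambda>(s, c). map_pmf (\<lambda>y. case hlll_update m \<kappa> s y of (s', c') \<Rightarrow> (s', c + c')) (hash_pmf m))"

end

theory Submission imports Defs begin

lemma reg_val_set_reg: "reg_val (set_reg \<kappa> s j r) i = (if i = j then r else reg_val s i)"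
  by (auto simp: set_reg_def reg_val_def in_window_def split: option.splits)

lemma reg_val_rebase: "i < m \<Longrightarrow> reg_val (rebase m \<kappa> s b) i = reg_val s i"
  by (auto simp: rebase_def reg_val_def in_window_def split: option.splits)

lemma compress_reg: "i < m \<Longrightarrow> reg_val (fst (compress m \<kappa> s)) i = reg_val s i"
  by (simp add: compress_def Let_def reg_val_rebase)

lemma compress_cost:
  assumes "m > 0" "\<forall>i<m. reg_val s i \<le> L"
  shows "snd (compress m \<kappa> s) \<le> m * (L + 2)"
proof -
  have "Max (reg_val s ` {..<m}) \<le> L" using assms by (subst Max_le_iff) auto
  hence "card (candidates m s) \<le> L + 1" by (simp add: candidates_def)
  hence "m * card (candidates m s) \<le> m * (L + 1)" by (rule mult_left_mono) simp
  thus ?thesis by (simp add: compress_def Let_def algebra_simps)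
qed

definition hinv :: "nat \<Rightarrow> nat \<Rightarrow> nat \<Rightarrow> hlll_state \<times> nat \<Rightarrow> bool" where
  "hinv m L t x \<longleftrightarrow> (\<forall>i<m. reg_val (fst x) i \<le> L) \<and>
     snd x \<le> t + m * (L + 2) * (\<Sum>i<m. reg_val (fst x) i)"

lemma inv_step:
  assumes "m > 0" "hinv m L t (s, c)" "j < m" "r \<le> L"
  shows "hinv m L (Suc t) (case hlll_update m \<kappa> s (j, r) of (s', c') \<Rightarrow> (s', c + c'))"
proof (cases "reg_val s j < r")
  case False
  thus ?thesis using assms(2) by (simp add: hlll_update_def hinv_def)
next
  case True
  define s1 where "s1 = set_reg \<kappa> s j r"
  obtain s' cc where sc: "compress m \<kappa> s1 = (s', cc)" by fastforce
  have r1: "\<forall>i<m. reg_val s1 i \<le> L" using assms by (auto simp: s1_def reg_val_set_reg hinv_def)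
  have r2: "\<forall>i<m. reg_val s' i = reg_val s1 i" using compress_reg[of _ m \<kappa> s1] sc by simp
  have cc: "cc \<le> m * (L + 2)" using compress_cost[OF assms(1) r1, of \<kappa>] sc by simp
  have "(\<Sum>i<m. reg_val s i) < (\<Sum>i<m. reg_val s1 i)"
    by (rule sum_strict_mono_ex1) (use True assms(3) in \<open>auto simp: s1_def reg_val_set_reg\<close>)
  hence sum: "(\<Sum>i<m. reg_val s i) + 1 \<le> (\<Sum>i<m. reg_val s' i)" using r2 by simp
  have c: "c \<le> t + m * (L + 2) * (\<Sum>i<m. reg_val s i)" using assms(2) by (simp add: hinv_def)
  have "c + (1 + cc) \<le> Suc t + m * (L + 2) * ((\<Sum>i<m. reg_val s i) + 1)"
    using c cc by (simp add: algebra_simps)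
  also have "\<dots> \<le> Suc t + m * (L + 2) * (\<Sum>i<m. reg_val s' i)"
    using sum by (intro add_left_mono mult_left_mono) auto
  finally have "c + (1 + cc) \<le> Suc t + m * (L + 2) * (\<Sum>i<m. reg_val s' i)" .
  moreover have "\<forall>i<m. reg_val s' i \<le> L" using r1 r2 by simp
  ultimately show ?thesis using True sc by (simp add: hlll_update_def hinv_def s1_def)
qed

lemma measure_bind_pmf':
  "measure_pmf.prob (bind_pmf p f) A = (\<integral>x. measure_pmf.prob (f x) A \<partial>measure_pmf p)"
  unfolding measure_pmf_bind
  by (rule measure_pmf.measure_bind[where N="count_space UNIV"]) (auto intro!: measurable_pmf_measure2 simp: measure_pmf_in_subprob_space)

lemma geo_prob: "measure_pmf.prob (map_pmf Suc (geometric_pmf (1/2))) {r. r \<le> L} = 1 - (1/2)^L"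
proof -
  have "Suc -` {r. r \<le> L} = {..<L}" by auto
  hence "measure_pmf.prob (map_pmf Suc (geometric_pmf (1/2))) {r. r \<le> L} = (\<Sum>i<L. (1/2::real)^i * (1/2))"
    by (simp add: measure_measure_pmf_finite)
  also have "\<dots> = 1 - (1/2)^L" by (induction L) (auto simp: field_simps)
  finally show ?thesis .
qed

lemma hash_prob: "measure_pmf.prob (hash_pmf m) {y. snd y \<le> L} = 1 - (1/2)^L"
proof -
  have "measure_pmf.prob (hash_pmf m) {y. snd y \<le> L} = measure_pmf.prob (map_pmf snd (hash_pmf m)) {r. r \<le> L}"
    by simp
  also have "map_pmf snd (hash_pmf m) = map_pmf Suc (geometric_pmf (1/2))"
    unfolding hash_pmf_def by (rule map_snd_pair_pmf)
  finally show ?thesis using geo_prob by simp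
qed

lemma run_prob:
  assumes "m > 0"
  shows "measure_pmf.prob (hlll_run m \<kappa> n) {x. hinv m L n x} \<ge> 1 - real n * (1/2)^L"
proof (induction n)
  case 0
  have "hinv m L 0 (hlll_init, 0)" by (simp add: hinv_def hlll_init_def reg_val_def)
  thus ?case by simp
next
  case (Suc n)
  define \<delta> :: real where "\<delta> = (1/2)^L"
  define G where "G = {x. hinv m L n x}"
  define F where "F = (\<lambda>(s, c). map_pmf (\<lambda>y. case hlll_update m \<kappa> s y of (s', c') \<Rightarrow> (s', c + c')) (hash_pmf m))"
  have run: "hlll_run m \<kappa> (Suc n) = bind_pmf (hlll_run m \<kappa> n) F" by (simp add: F_def)
  have pt: "measure_pmf.prob (F x) {x. hinv m L (Suc n) x} \<ge> indicator G x - \<delta>" for x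
  proof (cases "x \<in> G")
    case False
    have "0 \<le> measure_pmf.prob (F x) {x. hinv m L (Suc n) x}" by simp
    moreover have "(0::real) \<le> \<delta>" by (simp add: \<delta>_def)
    moreover have "indicator G x = (0::real)" using False by simp
    ultimately show ?thesis by linarith
  next
    case True
    obtain s c where x: "x = (s, c)" by fastforce
    let ?g = "\<lambda>y. case hlll_update m \<kappa> s y of (s', c') \<Rightarrow> (s', c + c')"
    have sub: "{y. snd y \<le> L} \<inter> set_pmf (hash_pmf m) \<subseteq> ?g -` {x. hinv m L (Suc n) x}"
    proof
      fix y assume y: "y \<in> {y. snd y \<le> L} \<inter> set_pmf (hash_pmf m)"
      obtain j r where yj: "y = (j, r)" by fastforce
      have sp: "set_pmf (pmf_of_set {..<m}) = {..<m}" using assms by (intro set_pmf_of_set) auto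
      have "j < m" using y yj sp by (auto simp: hash_pmf_def)
      moreover have "r \<le> L" using y yj by simp
      ultimately show "y \<in> ?g -` {x. hinv m L (Suc n) x}"
        using inv_step[OF assms, of L n s c j r \<kappa>] True x yj by (simp add: G_def)
    qed
    have "1 - \<delta> = measure_pmf.prob (hash_pmf m) ({y. snd y \<le> L} \<inter> set_pmf (hash_pmf m))"
      by (simp add: measure_Int_set_pmf hash_prob \<delta>_def)
    also have "\<dots> \<le> measure_pmf.prob (hash_pmf m) (?g -` {x. hinv m L (Suc n) x})"
      by (rule measure_pmf.finite_measure_mono[OF sub]) simp
    also have "\<dots> = measure_pmf.prob (F x) {x. hinv m L (Suc n) x}"
      by (simp add: F_def x)
    finally show ?thesis using True by simp
  qed
  have "measure_pmf.prob (hlll_run m \<kappa> n) G - \<delta> = (\<integral>x. indicator G x - \<delta> \<partial>measure_pmf (hlll_run m \<kappa> n))"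
    by (subst Bochner_Integration.integral_diff) (auto simp: measure_pmf.prob_space intro!: measure_pmf.integrable_const_bound[where B=1])
  also have "\<dots> \<le> (\<integral>x. measure_pmf.prob (F x) {x. hinv m L (Suc n) x} \<partial>measure_pmf (hlll_run m \<kappa> n))"
  proof (rule integral_mono)
    show "integrable (measure_pmf (hlll_run m \<kappa> n)) (\<lambda>x. indicator G x - \<delta>)"
      by (intro Bochner_Integration.integrable_diff measure_pmf.integrable_const_bound[where B=1]) (auto simp: \<delta>_def power_le_one)
    show "integrable (measure_pmf (hlll_run m \<kappa> n)) (\<lambda>x. measure_pmf.prob (F x) {x. hinv m L (Suc n) x})"
      by (intro measure_pmf.integrable_const_bound[where B=1]) auto
  qed (rule pt)
  also have "\<dots> = measure_pmf.prob (hlll_run m \<kappa> (Suc n)) {x. hinv m L (Suc n) x}"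
    unfolding run by (rule measure_bind_pmf'[symmetric])
  finally show ?case using Suc.IH by (simp add: G_def \<delta>_def algebra_simps)
qed

theorem lemma3p7:
  fixes \<beta> :: real
  assumes "0 < \<beta>" and "\<beta> < 1"
  shows "\<exists>C N0. \<forall>m \<kappa> n. (\<exists>k. m = 2 ^ k) \<longrightarrow> n \<ge> N0 \<longrightarrow>
           real n / (log 2 (real n))^2 > (real m)^2 \<longrightarrow>
           measure_pmf.prob (hlll_run m \<kappa> n) {x. real (snd x) \<le> C * real n} \<ge> 1 - \<beta>"
proof (intro exI allI impI)
  fix m \<kappa> n
  assume mk: "\<exists>k. m = (2::nat) ^ k" and nN: "nat \<lceil>8 / \<beta>\<rceil> + 2 \<le> n"
     and hm: "real n / (log 2 (real n))^2 > (real m)^2"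
  have m0: "m > 0" using mk by auto
  have n8: "8 / \<beta> \<le> real n" using nN by linarith
  have n2: "real n \<ge> 2" using nN by linarith
  have lpos: "log 2 (real n) \<ge> 1" using n2 by simp
  define L where "L = nat \<lceil>log 2 (real n / \<beta>)\<rceil>"
  have nb: "real n / \<beta> > 0" using assms n2 by simp
  have "real n / \<beta> > 1" using assms n2 by (simp add: field_simps)
  hence lnb: "log 2 (real n / \<beta>) > 0" by simp
  have L1: "real L < log 2 (real n / \<beta>) + 1" unfolding L_def using lnb by linarith
  have L2: "real L \<ge> log 2 (real n / \<beta>)" unfolding L_def by linarith
  have "2 powr log 2 (real n / \<beta>) \<le> 2 powr real L" using L2 by (intro powr_mono) auto
  hence "real n / \<beta> \<le> 2 ^ L" using nb by (simp add: powr_realpow)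
  hence del: "real n * (1/2)^L \<le> \<beta>" using assms by (simp add: field_simps power_divide)
  have "log 2 (real n / \<beta>) = log 2 (real n) + log 2 (1/\<beta>)"
    using assms n2 by (simp add: log_divide log_mult)
  moreover have "log 2 (8/\<beta>) = 3 + log 2 (1/\<beta>)"
    using assms log_pow_cancel[of 2 3] by (simp add: log_divide)
  moreover have "log 2 (8/\<beta>) \<le> log 2 (real n)" using n8 assms by (intro log_mono) auto
  ultimately have LL: "real L + 2 \<le> 2 * log 2 (real n)" using L1 by linarith
  have prob: "measure_pmf.prob (hlll_run m \<kappa> n) {x. hinv m L n x} \<ge> 1 - \<beta>"
    using run_prob[OF m0, where n=n and L=L and \<kappa>=\<kappa>] del by linarith
  have sub: "{x. hinv m L n x} \<subseteq> {x. real (snd x) \<le> 5 * real n}"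
  proof
    fix x assume "x \<in> {x. hinv m L n x}"
    hence i1: "\<forall>i<m. reg_val (fst x) i \<le> L" and i2: "snd x \<le> n + m * (L + 2) * (\<Sum>i<m. reg_val (fst x) i)"
      by (auto simp: hinv_def)
    have "(\<Sum>i<m. reg_val (fst x) i) \<le> m * L"
      using sum_bounded_above[of "{..<m}" "\<lambda>i. reg_val (fst x) i" L] i1 by auto
    hence "m * (L + 2) * (\<Sum>i<m. reg_val (fst x) i) \<le> m * (L + 2) * (m * L)"
      by (rule mult_left_mono) simp
    hence "snd x \<le> n + m * (L + 2) * (m * L)" using i2 by linarith
    hence A: "real (snd x) \<le> real (n + m * (L + 2) * (m * L))" by (rule of_nat_mono)
    have B: "real (n + m * (L + 2) * (m * L)) = real n + (real m)^2 * (real L * (real L + 2))"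
      by (simp add: power2_eq_square algebra_simps)
    have "real L * (real L + 2) \<le> (2 * log 2 (real n)) * (2 * log 2 (real n))"
      using LL by (intro mult_mono) auto
    hence C: "(real m)^2 * (real L * (real L + 2)) \<le> (real m)^2 * (4 * (log 2 (real n))^2)"
      by (intro mult_left_mono) (auto simp: power2_eq_square)
    have lp: "(log 2 (real n))^2 > 0" using lpos by simp
    have D: "(real m)^2 * (4 * (log 2 (real n))^2) \<le> 4 * real n"
      using hm lp by (simp add: field_simps)
    have "real (snd x) \<le> 5 * real n" using A B C D by linarith
    thus "x \<in> {x. real (snd x) \<le> 5 * real n}" by simp
  qed
  show "measure_pmf.prob (hlll_run m \<kappa> n) {x. real (snd x) \<le> 5 * real n} \<ge> 1 - \<beta>"
  proof -
    have "measure_pmf.prob (hlll_run m \<kappa> n) {x. hinv m L n x} \<le> measure_pmf.prob (hlll_run m \<kappa> n) {x. real (snd x) \<le> 5 * real n}"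
      by (rule measure_pmf.finite_measure_mono[OF sub]) simp
    thus ?thesis using prob by linarith
  qed
qed
end
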